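(* In the $\mathbf N$-agent system with class-wise distributions described in the context, let $\{\bar{\boldsymbol\mu}_t^{\mathbf N},\bar{\boldsymbol\nu}_t^{\mathbf N}\}_{t\ge0}$ be the collections of class-wise empirical state and action distributions induced by a policy $\bar{\boldsymbol\pi}=\{\bar{\boldsymbol\pi}_t\}_{t\ge0}$. Then for every $t\ge0$: (a) $\mathbb E|\bar{\boldsymbol\nu}_t^{\mathbf N}-\bar\nu^{\mathrm{MF}}(\bar{\boldsymbol\mu}_t^{\mathbf N},\bar{\boldsymbol\pi}_t)|_1\le\big(\sum_{k\in[K]}\frac1{\sqrt{N_k}}\big)\sqrt{|\mathcal U|}$; (b) $\mathbb E\Big|\frac1{N_{\mathrm{pop}}}\sum_{k\in[K]}\sum_{j=1}^{N_k}\bar r_k(x_{j,k}^t,u_{j,k}^t,\bar{\boldsymbol\mu}_t^{\mathbf N},\bar{\boldsymbol\nu}_t^{\mathbf N})-\sum_{k\in[K]}\theta_k\bar r_k^{\mathrm{MF}}(\bar{\boldsymbol\mu}_t^{\mathbf N},\bar{\boldsymbol\pi}_t)\Big|\le\bar C_R\big(\sum_{k}\frac1{\sqrt{N_k}}\big)\sqrt{|\mathcal U|}$; (c) $\mathbb E|\bar{\boldsymbol\mu}_{t+1}^{\mathbf N}-\bar P^{\mathrm{MF}}(\bar{\boldsymbol\mu}_t^{\mathbf N},\bar{\boldsymbol\pi}_t)|_1\le\bar C_P\big(\sum_k\frac1{\sqrt{N_k}}\big)\sqrt{|\mathcal X||\mathcal U|}$, where $\bar C_R=\bar M_R+\bar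 L_R$ and $\bar C_P=2+K\bar L_P$.
   Context: Fix $K\ge1$, $N_1,\dots,N_K\ge1$, $[K]=\{1,\dots,K\}$, $N_{\mathrm{pop}}=\sum_kN_k$, $\theta_k=N_k/N_{\mathrm{pop}}$, finite sets $\mathcal X,\mathcal U$. $\mathcal P(A)$ is the set of probability distributions on $A$; $\mathcal P^K(A)=\mathcal P(A)^K$ with elements written $\bar{\boldsymbol\mu}(\cdot,k)$ and $|\bar{\boldsymbol\mu}|_1=\sum_k\sum_a|\bar{\boldsymbol\mu}(a,k)|$. Agent $j\in[N_k]$ of class $k$ has state $x_{j,k}^t$ and action $u_{j,k}^t$; $\bar{\boldsymbol\mu}_t^{\mathbf N}(x,k)=\frac1{N_k}\sum_{j=1}^{N_k}\mathbf 1(x_{j,k}^t=x)$, $\bar{\boldsymbol\nu}_t^{\mathbf N}(u,k)=\frac1{N_k}\sum_{j=1}^{N_k}\mathbf 1(u_{j,k}^t=u)$. Constants $\bar M_R,\bar L_R,\bar L_P>0$. For each $k$: $\bar r_k:\mathcal X\times\mathcal U\times\mathcal P^K(\mathcal X)\times\mathcal P^K(\mathcal U)\to\mathbb R$, $\bar P_k:\mathcal X\times\mathcal U\times\mathcal P^K(\mathcal X)\times\mathcal P^K(\mathcal U)\to\mathcal P(\mathcal X)$ with $|\bar r_k|\le\bar M_R$, $|\bar r_k(x,u,\bar{\boldsymbol\mu}_1,\bar{\boldsymbol\nu}_1)-\bar r_k(x,u,\bar{\boldsymbol\mu}_2,\bar{\boldsymbol\nu}_2)|\le\bar L_R(|\bar{\boldsymbol\mu}_1-\bar{\boldsymbol\mu}_2|_1+|\bar{\boldsymbol\nu}_1-\bar{\boldsymbol\nu}_2|_1)$,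 $|\bar P_k(x,u,\bar{\boldsymbol\mu}_1,\bar{\boldsymbol\nu}_1)-\bar P_k(x,u,\bar{\boldsymbol\mu}_2,\bar{\boldsymbol\nu}_2)|_1\le\bar L_P(|\bar{\boldsymbol\mu}_1-\bar{\boldsymbol\mu}_2|_1+|\bar{\boldsymbol\nu}_1-\bar{\boldsymbol\nu}_2|_1)$. A policy is $\bar{\boldsymbol\pi}=\{\bar{\boldsymbol\pi}_t\}_{t\ge0}$, $\bar{\boldsymbol\pi}_t=(\bar\pi_k^t)_k$, $\bar\pi_k^t:\mathcal X\times\mathcal P^K(\mathcal X)\to\mathcal P(\mathcal U)$. Dynamics: conditioned on all states at time $t$, actions are independent across agents with $u_{j,k}^t\sim\bar\pi_k^t(x_{j,k}^t,\bar{\boldsymbol\mu}_t^{\mathbf N})$; conditioned on states and actions, next states are independent with $x_{j,k}^{t+1}\sim\bar P_k(x_{j,k}^t,u_{j,k}^t,\bar{\boldsymbol\mu}_t^{\mathbf N},\bar{\boldsymbol\nu}_t^{\mathbf N})$. Mean-field operators: $\bar\nu^{\mathrm{MF}}(\bar{\boldsymbol\mu},\bar{\boldsymbol\pi})(u,k)=\sum_x\bar\pi_k(x,\bar{\boldsymbol\mu})(u)\bar{\boldsymbol\mu}(x,k)$; $\bar P^{\mathrm{MF}}(\bar{\boldsymbol\mu},\bar{\boldsymbol\pi})(x',k)=\sum_{x,u}\bar{\boldsymbol\mu}(x,k)\bar\pi_k(x,\bar{\boldsymbol\mu})(u)\bar P_k(x,u,\bar{\boldsymbol\mu},\bar\nu^{\mathrm{MF}}(\bar{\boldsymbol\mu},\bar{\boldsymbol\pi}))(x')$;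 $\bar r_k^{\mathrm{MF}}(\bar{\boldsymbol\mu},\bar{\boldsymbol\pi})=\sum_{x,u}\bar{\boldsymbol\mu}(x,k)\bar\pi_k(x,\bar{\boldsymbol\mu})(u)\bar r_k(x,u,\bar{\boldsymbol\mu},\bar\nu^{\mathrm{MF}}(\bar{\boldsymbol\mu},\bar{\boldsymbol\pi}))$. *)

theory Defs
  imports "HOL-Probability.Probability"
begin

text \<open>Classes are indexed by k in {1..K}, agents of
class k by j in {1..N k}; a joint configuration of states (resp. actions) is a
function on pairs (k,j). Elements of P^K(A) are represented as functions
nat => A => real (class index first).\<close>

type_synonym ('a) distK = "nat \<Rightarrow> 'a \<Rightarrow> real"

definition agents :: "nat \<Rightarrow> (nat \<Rightarrow> nat) \<Rightarrow> (nat \<times> nat) set" where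
  "agents K N = {(k, j). k \<in> {1..K} \<and> j \<in> {1..N k}}"

definition is_distK :: "nat \<Rightarrow> ('a::finite) distK \<Rightarrow> bool" where
  "is_distK K mu \<longleftrightarrow> (\<forall>k\<in>{1..K}. (\<forall>a. 0 \<le> mu k a) \<and> (\<Sum>a\<in>UNIV. mu k a) = 1)"

definition l1K :: "nat \<Rightarrow> ('a::finite) distK \<Rightarrow> 'a distK \<Rightarrow> real" where
  "l1K K mu1 mu2 = (\<Sum>k\<in>{1..K}. \<Sum>a\<in>UNIV. \<bar>mu1 k a - mu2 k a\<bar>)"

definition emp :: "(nat \<Rightarrow> nat) \<Rightarrow> (nat \<times> nat \<Rightarrow> 'a) \<Rightarrow> 'a distK" where
  "emp N s k a = real (card {j \<in> {1..N k}. s (k, j) = a}) / real (N k)"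

text \<open>mean-field operators; a (single-time) policy is
  pol :: nat => 'x => 'x distK => 'u pmf  (class, state, mean field)\<close>
definition nuMF :: "('x::finite) distK \<Rightarrow> (nat \<Rightarrow> 'x \<Rightarrow> 'x distK \<Rightarrow> 'u pmf) \<Rightarrow> 'u distK" where
  "nuMF mu pol k u = (\<Sum>x\<in>UNIV. pmf (pol k x mu) u * mu k x)"

definition PMF :: "(nat \<Rightarrow> 'x \<Rightarrow> 'u \<Rightarrow> 'x distK \<Rightarrow> 'u distK \<Rightarrow> 'x pmf)
    \<Rightarrow> ('x::finite) distK \<Rightarrow> (nat \<Rightarrow> 'x \<Rightarrow> 'x distK \<Rightarrow> ('u::finite) pmf) \<Rightarrow> 'x distK" where
  "PMF P mu pol k x' =
     (\<Sum>x\<in>UNIV. \<Sum>u\<in>UNIV. mu k x * pmf (pol k x mu) u * pmf (P k x u mu (nuMF mu pol)) x')"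

definition rMF :: "(nat \<Rightarrow> 'x \<Rightarrow> 'u \<Rightarrow> 'x distK \<Rightarrow> 'u distK \<Rightarrow> real)
    \<Rightarrow> nat \<Rightarrow> ('x::finite) distK \<Rightarrow> (nat \<Rightarrow> 'x \<Rightarrow> 'x distK \<Rightarrow> ('u::finite) pmf) \<Rightarrow> real" where
  "rMF r k mu pol =
     (\<Sum>x\<in>UNIV. \<Sum>u\<in>UNIV. mu k x * pmf (pol k x mu) u * r k x u mu (nuMF mu pol))"

definition act_dist :: "nat \<Rightarrow> (nat \<Rightarrow> nat) \<Rightarrow> (nat \<Rightarrow> nat \<Rightarrow> 'x \<Rightarrow> 'x distK \<Rightarrow> 'u pmf)
    \<Rightarrow> nat \<Rightarrow> (nat \<times> nat \<Rightarrow> 'x) \<Rightarrow> (nat \<times> nat \<Rightarrow> 'u) pmf" where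
  "act_dist K N pol t s =
     Pi_pmf (agents K N) undefined (\<lambda>(k, j). pol t k (s (k, j)) (emp N s))"

definition next_dist :: "nat \<Rightarrow> (nat \<Rightarrow> nat) \<Rightarrow> (nat \<Rightarrow> 'x \<Rightarrow> 'u \<Rightarrow> 'x distK \<Rightarrow> 'u distK \<Rightarrow> 'x pmf)
    \<Rightarrow> (nat \<times> nat \<Rightarrow> 'x) \<Rightarrow> (nat \<times> nat \<Rightarrow> 'u) \<Rightarrow> (nat \<times> nat \<Rightarrow> 'x) pmf" where
  "next_dist K N P s a =
     Pi_pmf (agents K N) undefined (\<lambda>(k, j). P k (s (k, j)) (a (k, j)) (emp N s) (emp N a))"

primrec state_dist :: "nat \<Rightarrow> (nat \<Rightarrow> nat) \<Rightarrow> (nat \<Rightarrow> nat \<Rightarrow> 'x \<Rightarrow> 'x distK \<Rightarrow> 'u pmf)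
    \<Rightarrow> (nat \<Rightarrow> 'x \<Rightarrow> 'u \<Rightarrow> 'x distK \<Rightarrow> 'u distK \<Rightarrow> 'x pmf)
    \<Rightarrow> (nat \<times> nat \<Rightarrow> 'x) pmf \<Rightarrow> nat \<Rightarrow> (nat \<times> nat \<Rightarrow> 'x) pmf" where
  "state_dist K N pol P init 0 = init"
| "state_dist K N pol P init (Suc t) =
     bind_pmf (state_dist K N pol P init t)
       (\<lambda>s. bind_pmf (act_dist K N pol t s) (\<lambda>a. next_dist K N P s a))"

definition sa_dist where
  "sa_dist K N pol P init t =
     bind_pmf (state_dist K N pol P init t)
       (\<lambda>s. map_pmf (\<lambda>a. (s, a)) (act_dist K N pol t s))"

definition sas_dist where
  "sas_dist K N pol P init t =
     bind_pmf (sa_dist K N pol P init t)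
       (\<lambda>(s, a). map_pmf (\<lambda>s'. (s, a, s')) (next_dist K N P s a))"

end

theory Submission
  imports Defs
begin

lemma fin_Pi:
  fixes D :: "'i \<Rightarrow> 'a::finite pmf"
  assumes "finite I"
  shows "finite (set_pmf (Pi_pmf I dflt D))"
  using finite_subset[OF set_Pi_pmf_subset'[OF assms, of dflt D] finite_PiE_dflt[OF assms]] by auto

lemma int_pair_fin:
  fixes F :: "'a \<times> 'b \<Rightarrow> real"
  assumes "finite (set_pmf p)" "finite (set_pmf q)"
  shows "measure_pmf.expectation (pair_pmf p q) F =
         measure_pmf.expectation p (\<lambda>a. measure_pmf.expectation q (\<lambda>b. F (a, b)))"
proof -
  have "measure_pmf.expectation (pair_pmf p q) F = (\<Sum>z\<in>set_pmf p \<times> set_pmf q. F z * pmf (pair_pmf p q) z)"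
    by (rule integral_measure_pmf_real) (use assms in auto)
  also have "\<dots> = (\<Sum>(a,b)\<in>set_pmf p \<times> set_pmf q. F (a,b) * pmf p a * pmf q b)"
    by (rule sum.cong) (auto simp: pmf_pair mult.assoc)
  also have "\<dots> = (\<Sum>a\<in>set_pmf p. \<Sum>b\<in>set_pmf q. F (a,b) * pmf p a * pmf q b)"
    by (rule sum.cartesian_product[symmetric])
  also have "\<dots> = (\<Sum>a\<in>set_pmf p. (\<Sum>b\<in>set_pmf q. F (a,b) * pmf q b) * pmf p a)"
    by (simp add: sum_distrib_left sum_distrib_right mult_ac)
  also have "\<dots> = measure_pmf.expectation p (\<lambda>a. measure_pmf.expectation q (\<lambda>b. F (a, b)))"
    apply (subst integral_measure_pmf_real[where A="set_pmf p"])
    using assms apply auto[2]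
    apply (rule sum.cong, simp)
    apply (subst integral_measure_pmf_real[where A="set_pmf q"])
    using assms by auto
  finally show ?thesis .
qed

lemma sq_sum:
  fixes D :: "'i \<Rightarrow> 'a::finite pmf" and h :: "'i \<Rightarrow> 'a \<Rightarrow> real"
  assumes "finite I" "\<And>i. i \<in> I \<Longrightarrow> measure_pmf.expectation (D i) (h i) = 0"
  shows "measure_pmf.expectation (Pi_pmf I dflt D) (\<lambda>a. (\<Sum>i\<in>I. h i (a i))\<^sup>2)
       = (\<Sum>i\<in>I. measure_pmf.expectation (D i) (\<lambda>y. (h i y)\<^sup>2))"
  using assms
proof (induction I rule: finite_induct)
  case empty
  then show ?case by simp
next
  case (insert x A)
  have fA: "finite (set_pmf (Pi_pmf A dflt D))" using fin_Pi insert by blast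
  have fx: "finite (set_pmf (D x))" by simp
  have e0: "measure_pmf.expectation (D x) (h x) = 0" using insert by simp
  have hA: "(\<Sum>i\<in>A. h i (if i = x then a else b i)) = (\<Sum>i\<in>A. h i (b i))" for a b
    using insert(2) by (intro sum.cong) auto
  have "measure_pmf.expectation (Pi_pmf (insert x A) dflt D) (\<lambda>a. (\<Sum>i\<in>insert x A. h i (a i))\<^sup>2)
      = measure_pmf.expectation (pair_pmf (D x) (Pi_pmf A dflt D)) (\<lambda>(y,f). (h x y + (\<Sum>i\<in>A. h i (f i)))\<^sup>2)"
    using insert by (simp add: Pi_pmf_insert case_prod_beta, intro Bochner_Integration.integral_cong refl) (simp add: hA split_beta)
  also have "\<dots> = measure_pmf.expectation (D x) (\<lambda>y. measure_pmf.expectation (Pi_pmf A dflt D)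
        (\<lambda>f. (h x y)\<^sup>2 + 2 * h x y * (\<Sum>i\<in>A. h i (f i)) + (\<Sum>i\<in>A. h i (f i))\<^sup>2))"
    by (subst int_pair_fin[OF fx fA]) (simp add: power2_sum add_ac)
  also have "\<dots> = measure_pmf.expectation (D x) (\<lambda>y. (h x y)\<^sup>2 + 2 * h x y * measure_pmf.expectation (Pi_pmf A dflt D) (\<lambda>f. \<Sum>i\<in>A. h i (f i))
        + (\<Sum>i\<in>A. measure_pmf.expectation (D i) (\<lambda>y. (h i y)\<^sup>2)))"
  proof (intro Bochner_Integration.integral_cong refl)
    fix y
    let ?M = "measure_pmf (Pi_pmf A dflt D)"
    let ?S = "\<lambda>f. \<Sum>i\<in>A. h i (f i)"
    have I: "integrable ?M g" for g :: "_ \<Rightarrow> real" using integrable_measure_pmf_finite[OF fA] .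
    have "integral\<^sup>L ?M (\<lambda>f. (h x y)\<^sup>2 + 2 * h x y * ?S f + (?S f)\<^sup>2)
       = integral\<^sup>L ?M (\<lambda>f. (h x y)\<^sup>2 + 2 * h x y * ?S f) + integral\<^sup>L ?M (\<lambda>f. (?S f)\<^sup>2)"
      by (rule Bochner_Integration.integral_add[OF I I])
    also have "integral\<^sup>L ?M (\<lambda>f. (h x y)\<^sup>2 + 2 * h x y * ?S f) = (h x y)\<^sup>2 + 2 * h x y * integral\<^sup>L ?M ?S"
      by (subst Bochner_Integration.integral_add[OF I I]) simp
    also have "integral\<^sup>L ?M (\<lambda>f. (?S f)\<^sup>2) = (\<Sum>i\<in>A. measure_pmf.expectation (D i) (\<lambda>y. (h i y)\<^sup>2))"
      using insert by simp
    finally show "integral\<^sup>L ?M (\<lambda>f. (h x y)\<^sup>2 + 2 * h x y * ?S f + (?S f)\<^sup>2) =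
       (h x y)\<^sup>2 + 2 * h x y * integral\<^sup>L ?M ?S + (\<Sum>i\<in>A. measure_pmf.expectation (D i) (\<lambda>y. (h i y)\<^sup>2))" .
  qed
  also have "\<dots> = measure_pmf.expectation (D x) (\<lambda>y. (h x y)\<^sup>2) + 2 * measure_pmf.expectation (D x) (h x) * measure_pmf.expectation (Pi_pmf A dflt D) (\<lambda>f. \<Sum>i\<in>A. h i (f i))
        + (\<Sum>i\<in>A. measure_pmf.expectation (D i) (\<lambda>y. (h i y)\<^sup>2))"
  proof -
    have I: "integrable (measure_pmf (D x)) g" for g :: "_ \<Rightarrow> real" using integrable_measure_pmf_finite[OF fx] .
    show ?thesis
      by (simp add: Bochner_Integration.integral_add[OF I I])
  qed
  also have "\<dots> = (\<Sum>i\<in>insert x A. measure_pmf.expectation (D i) (\<lambda>y. (h i y)\<^sup>2))"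
    using insert e0 by simp
  finally show ?case .
qed

lemma jensen_sq:
  fixes W :: "'a \<Rightarrow> real"
  assumes "finite (set_pmf M)"
  shows "measure_pmf.expectation M (\<lambda>x. \<bar>W x\<bar>) \<le> sqrt (measure_pmf.expectation M (\<lambda>x. (W x)\<^sup>2))"
proof -
  have I: "integrable (measure_pmf M) g" for g :: "_ \<Rightarrow> real" using integrable_measure_pmf_finite[OF assms] .
  define c where "c = measure_pmf.expectation M (\<lambda>x. \<bar>W x\<bar>)"
  have "0 \<le> measure_pmf.expectation M (\<lambda>x. (\<bar>W x\<bar> - c)\<^sup>2)"
    by (rule Bochner_Integration.integral_nonneg) simp
  also have "(\<lambda>x. (\<bar>W x\<bar> - c)\<^sup>2) = (\<lambda>x. (W x)\<^sup>2 - 2 * c * \<bar>W x\<bar> + c\<^sup>2)"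
    by (rule ext) (simp add: power2_diff algebra_simps)
  also have "measure_pmf.expectation M \<dots> = measure_pmf.expectation M (\<lambda>x. (W x)\<^sup>2) - 2 * c * c + c\<^sup>2"
    by (simp add: Bochner_Integration.integral_add[OF I I] Bochner_Integration.integral_diff[OF I I] c_def)
  finally have "c\<^sup>2 \<le> measure_pmf.expectation M (\<lambda>x. (W x)\<^sup>2)" by (simp add: power2_eq_square)
  then show ?thesis unfolding c_def by (rule real_le_rsqrt)
qed

lemma CL:
  fixes D :: "'i \<Rightarrow> 'a::finite pmf" and g :: "'i \<Rightarrow> 'a \<Rightarrow> real"
  assumes "finite I" "J \<subseteq> I"
  shows "measure_pmf.expectation (Pi_pmf I dflt D)
           (\<lambda>a. \<bar>\<Sum>i\<in>J. (g i (a i) - measure_pmf.expectation (D i) (g i))\<bar>)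
         \<le> sqrt (\<Sum>i\<in>J. measure_pmf.expectation (D i) (\<lambda>y. (g i y)\<^sup>2))"
proof -
  define m where "m i = measure_pmf.expectation (D i) (g i)" for i
  define h where "h i y = (if i \<in> J then g i y - m i else 0)" for i y
  have ID: "integrable (measure_pmf (D i)) f" for i and f :: "_ \<Rightarrow> real"
    by (rule integrable_measure_pmf_finite) simp
  have fJ: "finite J" using assms finite_subset by blast
  have hs: "(\<Sum>i\<in>I. h i (a i)) = (\<Sum>i\<in>J. (g i (a i) - m i))" for a
    unfolding h_def using assms
    by (simp add: sum.If_cases Int_absorb1)
  have h0: "measure_pmf.expectation (D i) (h i) = 0" for i
    unfolding h_def m_def by (cases "i \<in> J") (simp_all add: Bochner_Integration.integral_diff[OF ID ID])
  have "measure_pmf.expectation (Pi_pmf I dflt D) (\<lambda>a. \<bar>\<Sum>i\<in>J. (g i (a i) - m i)\<bar>)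
      \<le> sqrt (measure_pmf.expectation (Pi_pmf I dflt D) (\<lambda>a. (\<Sum>i\<in>J. (g i (a i) - m i))\<^sup>2))"
    by (rule jensen_sq[OF fin_Pi[OF assms(1)]])
  also have "measure_pmf.expectation (Pi_pmf I dflt D) (\<lambda>a. (\<Sum>i\<in>J. (g i (a i) - m i))\<^sup>2)
      = (\<Sum>i\<in>I. measure_pmf.expectation (D i) (\<lambda>y. (h i y)\<^sup>2))"
    using sq_sum[OF assms(1), of D h dflt] h0 by (simp add: hs)
  also have "\<dots> = (\<Sum>i\<in>J. measure_pmf.expectation (D i) (\<lambda>y. (g i y - m i)\<^sup>2))"
  proof -
    have "(\<Sum>i\<in>I. measure_pmf.expectation (D i) (\<lambda>y. (h i y)\<^sup>2))
        = (\<Sum>i\<in>I. if i \<in> J then measure_pmf.expectation (D i) (\<lambda>y. (g i y - m i)\<^sup>2) else 0)"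
      by (rule sum.cong) (auto simp: h_def)
    then show ?thesis using assms by (simp add: sum.If_cases Int_absorb1)
  qed
  also have "\<dots> \<le> (\<Sum>i\<in>J. measure_pmf.expectation (D i) (\<lambda>y. (g i y)\<^sup>2))"
  proof (rule sum_mono)
    fix i
    have "measure_pmf.expectation (D i) (\<lambda>y. (g i y - m i)\<^sup>2)
        = measure_pmf.expectation (D i) (\<lambda>y. (g i y)\<^sup>2 - 2 * m i * g i y + (m i)\<^sup>2)"
      by (simp add: power2_diff algebra_simps)
    also have "\<dots> = measure_pmf.expectation (D i) (\<lambda>y. (g i y)\<^sup>2) - (m i)\<^sup>2"
      by (simp add: Bochner_Integration.integral_add[OF ID ID] Bochner_Integration.integral_diff[OF ID ID] m_def power2_eq_square)
    finally show "measure_pmf.expectation (D i) (\<lambda>y. (g i y - m i)\<^sup>2) \<le> measure_pmf.expectation (D i) (\<lambda>y. (g i y)\<^sup>2)"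
      by simp
  qed
  finally show ?thesis unfolding m_def by (simp add: real_sqrt_le_iff)
qed

lemma sum_sqrt_le:
  fixes c :: "'y \<Rightarrow> real"
  assumes "finite Y" "\<And>y. y \<in> Y \<Longrightarrow> c y \<ge> 0"
  shows "(\<Sum>y\<in>Y. sqrt (c y)) \<le> sqrt (real (card Y) * (\<Sum>y\<in>Y. c y))"
proof -
  have "(\<Sum>y\<in>Y. 1 * sqrt (c y))\<^sup>2 \<le> (\<Sum>y\<in>Y. 1\<^sup>2) * (\<Sum>y\<in>Y. (sqrt (c y))\<^sup>2)"
    by (rule Cauchy_Schwarz_ineq_sum)
  also have "\<dots> = real (card Y) * (\<Sum>y\<in>Y. c y)" using assms by simp
  finally show ?thesis by (intro real_le_rsqrt) simp
qed

lemma gen_bound: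
  fixes D :: "nat \<times> nat \<Rightarrow> 'a::finite pmf" and g :: "nat \<times> nat \<Rightarrow> 'a \<Rightarrow> 'y::finite \<Rightarrow> real"
  assumes fI: "finite I" and sub: "Pair k ` {1..n} \<subseteq> I" and n1: "n \<ge> 1"
    and g0: "\<And>i a y. 0 \<le> g i a y" and g1: "\<And>i a. (\<Sum>y\<in>UNIV. g i a y) \<le> 1"
  shows "measure_pmf.expectation (Pi_pmf I dflt D)
     (\<lambda>a. \<Sum>y\<in>UNIV. \<bar>(1 / real n) * (\<Sum>j\<in>{1..n}. (g (k,j) (a (k,j)) y - measure_pmf.expectation (D (k,j)) (\<lambda>b. g (k,j) b y)))\<bar>)
     \<le> sqrt (real CARD('y)) / sqrt (real n)"
proof -
  let ?J = "Pair k ` {1..n}"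
  let ?M = "measure_pmf (Pi_pmf I dflt D)"
  have IP: "integrable ?M f" for f :: "_ \<Rightarrow> real" by (rule integrable_measure_pmf_finite[OF fin_Pi[OF fI]])
  have ID: "integrable (measure_pmf (D i)) f" for i and f :: "_ \<Rightarrow> real"
    by (rule integrable_measure_pmf_finite) simp
  have inj: "inj_on (Pair k) {1..n}" by (auto simp: inj_on_def)
  have re: "(\<Sum>j\<in>{1..n}. F (k,j)) = (\<Sum>i\<in>?J. F i)" for F :: "nat \<times> nat \<Rightarrow> real"
    by (subst sum.reindex[OF inj]) (simp add: comp_def)
  have re': "(\<Sum>j\<in>{1..n}. (g (k,j) (a (k,j)) y - measure_pmf.expectation (D (k,j)) (\<lambda>b. g (k,j) b y)))
     = (\<Sum>i\<in>?J. (g i (a i) y - measure_pmf.expectation (D i) (\<lambda>b. g i b y)))" for a y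
    by (rule re)
  have gle1: "g i a y \<le> 1" for i a y
  proof -
    have "g i a y \<le> (\<Sum>y\<in>UNIV. g i a y)" by (rule member_le_sum) (auto simp: g0)
    then show ?thesis using g1[of i a] by simp
  qed
  have "measure_pmf.expectation (Pi_pmf I dflt D)
     (\<lambda>a. \<Sum>y\<in>UNIV. \<bar>(1 / real n) * (\<Sum>j\<in>{1..n}. (g (k,j) (a (k,j)) y - measure_pmf.expectation (D (k,j)) (\<lambda>b. g (k,j) b y)))\<bar>)
    = (\<Sum>y\<in>UNIV. (1 / real n) * measure_pmf.expectation (Pi_pmf I dflt D)
        (\<lambda>a. \<bar>\<Sum>i\<in>?J. (g i (a i) y - measure_pmf.expectation (D i) (\<lambda>b. g i b y))\<bar>))"
    unfolding re' by (subst Bochner_Integration.integral_sum[OF IP]) (simp add: abs_mult)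
  also have "\<dots> \<le> (\<Sum>y\<in>UNIV. (1 / real n) * sqrt (\<Sum>i\<in>?J. measure_pmf.expectation (D i) (\<lambda>b. (g i b y)\<^sup>2)))"
  proof (intro sum_mono mult_left_mono)
    fix y
    show "measure_pmf.expectation (Pi_pmf I dflt D)
        (\<lambda>a. \<bar>\<Sum>i\<in>?J. (g i (a i) y - measure_pmf.expectation (D i) (\<lambda>b. g i b y))\<bar>)
        \<le> sqrt (\<Sum>i\<in>?J. measure_pmf.expectation (D i) (\<lambda>b. (g i b y)\<^sup>2))"
      using CL[OF fI sub, of dflt D "\<lambda>i b. g i b y"] by simp
  qed simp
  also have "\<dots> = (1 / real n) * (\<Sum>y\<in>UNIV. sqrt (\<Sum>i\<in>?J. measure_pmf.expectation (D i) (\<lambda>b. (g i b y)\<^sup>2)))"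
    by (simp add: sum_distrib_left)
  also have "\<dots> \<le> (1 / real n) * sqrt (real (card (UNIV::'y set)) * (\<Sum>y\<in>UNIV. \<Sum>i\<in>?J. measure_pmf.expectation (D i) (\<lambda>b. (g i b y)\<^sup>2)))"
    by (intro mult_left_mono sum_sqrt_le) (auto intro!: sum_nonneg Bochner_Integration.integral_nonneg)
  also have "(\<Sum>y\<in>UNIV. \<Sum>i\<in>?J. measure_pmf.expectation (D i) (\<lambda>b. (g i b y)\<^sup>2)) \<le> real n"
  proof -
    have "(\<Sum>y\<in>UNIV. \<Sum>i\<in>?J. measure_pmf.expectation (D i) (\<lambda>b. (g i b y)\<^sup>2))
        = (\<Sum>i\<in>?J. measure_pmf.expectation (D i) (\<lambda>b. \<Sum>y\<in>UNIV. (g i b y)\<^sup>2))"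
      by (subst sum.swap) (simp add: Bochner_Integration.integral_sum[OF ID])
    also have "\<dots> \<le> (\<Sum>i\<in>?J. measure_pmf.expectation (D i) (\<lambda>b. 1))"
    proof (intro sum_mono Bochner_Integration.integral_mono[OF ID ID])
      fix i b
      have "(\<Sum>y\<in>UNIV. (g i b y)\<^sup>2) \<le> (\<Sum>y\<in>UNIV. g i b y)"
        by (intro sum_mono) (simp add: power2_eq_square g0 gle1 mult_left_le)
      then show "(\<Sum>y\<in>UNIV. (g i b y)\<^sup>2) \<le> 1" using g1[of i b] by simp
    qed
    also have "\<dots> = real n" using card_image[OF inj] by simp
    finally show ?thesis .
  qed
  then have "(1 / real n) * sqrt (real (card (UNIV::'y set)) * (\<Sum>y\<in>UNIV. \<Sum>i\<in>?J. measure_pmf.expectation (D i) (\<lambda>b. (g i b y)\<^sup>2)))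
      \<le> (1 / real n) * sqrt (real (card (UNIV::'y set)) * real n)"
    by (intro mult_left_mono real_sqrt_le_mono) auto
  also have "\<dots> = sqrt (real CARD('y)) / sqrt (real n)"
    using n1 by (simp add: real_sqrt_mult field_simps)
  finally show ?thesis by simp
qed

lemma bind_bound_const:
  fixes f :: "'b \<Rightarrow> real"
  assumes f0: "\<And>x. 0 \<le> f x" and B0: "0 \<le> B"
    and fin: "\<And>s. s \<in> set_pmf p \<Longrightarrow> finite (set_pmf (q s))"
    and bd: "\<And>s. s \<in> set_pmf p \<Longrightarrow> measure_pmf.expectation (q s) f \<le> B"
  shows "measure_pmf.expectation (bind_pmf p q) f \<le> B"
proof (cases "integrable (measure_pmf (bind_pmf p q)) f")
  case True
  have "ennreal (measure_pmf.expectation (bind_pmf p q) f) = (\<integral>\<^sup>+x. ennreal (f x) \<partial>bind_pmf p q)"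
    by (rule nn_integral_eq_integral[symmetric]) (use True f0 in auto)
  also have "\<dots> = (\<integral>\<^sup>+s. \<integral>\<^sup>+x. ennreal (f x) \<partial>q s \<partial>p)" by simp
  also have "\<dots> \<le> (\<integral>\<^sup>+s. ennreal B \<partial>p)"
  proof (rule nn_integral_mono_AE, rule AE_pmfI)
    fix s assume s: "s \<in> set_pmf p"
    have "(\<integral>\<^sup>+x. ennreal (f x) \<partial>q s) = ennreal (measure_pmf.expectation (q s) f)"
      by (rule nn_integral_eq_integral) (use integrable_measure_pmf_finite[OF fin[OF s]] f0 in auto)
    also have "\<dots> \<le> ennreal B" using bd[OF s] by (rule ennreal_leI)
    finally show "(\<integral>\<^sup>+x. ennreal (f x) \<partial>q s) \<le> ennreal B" .
  qed
  also have "\<dots> = ennreal B" by (simp add: measure_pmf.emeasure_space_1)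
  finally show ?thesis using B0 by (simp add: ennreal_le_iff)
next
  case False
  then show ?thesis using B0 by (simp add: not_integrable_integral_eq)
qed

lemma bind_bound_gen:
  fixes f :: "'b \<Rightarrow> real"
  assumes f0: "\<And>x. 0 \<le> f x" and finp: "finite (set_pmf p)"
    and fin: "\<And>s. s \<in> set_pmf p \<Longrightarrow> finite (set_pmf (q s))"
    and bd: "\<And>s. s \<in> set_pmf p \<Longrightarrow> measure_pmf.expectation (q s) f \<le> g s"
  shows "measure_pmf.expectation (bind_pmf p q) f \<le> measure_pmf.expectation p g"
proof -
  have finb: "finite (set_pmf (bind_pmf p q))" using finp fin by simp
  have g0: "AE s in measure_pmf p. 0 \<le> g s"
  proof (rule AE_pmfI)
    fix s assume s: "s \<in> set_pmf p"
    have "0 \<le> measure_pmf.expectation (q s) f" by (rule Bochner_Integration.integral_nonneg) (simp add: f0)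
    then show "0 \<le> g s" using bd[OF s] by linarith
  qed
  have Eg0: "0 \<le> measure_pmf.expectation p g"
    by (rule Bochner_Integration.integral_nonneg_AE[OF g0])
  have "ennreal (measure_pmf.expectation (bind_pmf p q) f) = (\<integral>\<^sup>+x. ennreal (f x) \<partial>bind_pmf p q)"
    by (rule nn_integral_eq_integral[symmetric]) (use integrable_measure_pmf_finite[OF finb] f0 in auto)
  also have "\<dots> = (\<integral>\<^sup>+s. \<integral>\<^sup>+x. ennreal (f x) \<partial>q s \<partial>p)" by simp
  also have "\<dots> \<le> (\<integral>\<^sup>+s. ennreal (g s) \<partial>p)"
  proof (rule nn_integral_mono_AE, rule AE_pmfI)
    fix s assume s: "s \<in> set_pmf p"
    have "(\<integral>\<^sup>+x. ennreal (f x) \<partial>q s) = ennreal (measure_pmf.expectation (q s) f)"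
      by (rule nn_integral_eq_integral) (use integrable_measure_pmf_finite[OF fin[OF s]] f0 in auto)
    also have "\<dots> \<le> ennreal (g s)" using bd[OF s] by (rule ennreal_leI)
    finally show "(\<integral>\<^sup>+x. ennreal (f x) \<partial>q s) \<le> ennreal (g s)" .
  qed
  also have "\<dots> = ennreal (measure_pmf.expectation p g)"
    by (rule nn_integral_eq_integral) (use integrable_measure_pmf_finite[OF finp] g0 in auto)
  finally show ?thesis using Eg0 by (simp add: ennreal_le_iff)
qed

lemma card_filter_sum:
  assumes "finite A"
  shows "real (card {j\<in>A. P j}) = (\<Sum>j\<in>A. if P j then 1 else 0)"
  using assms by (simp add: sum.If_cases Int_def)

lemma fiber:
  fixes F :: "'x::finite \<Rightarrow> real"
  assumes "finite A"
  shows "(\<Sum>j\<in>A. F (s j)) = (\<Sum>x\<in>UNIV. real (card {j\<in>A. s j = x}) * F x)"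
proof -
  have "(\<Sum>j\<in>A. F (s j)) = (\<Sum>j\<in>A. \<Sum>x\<in>UNIV. if s j = x then F x else 0)"
    by simp
  also have "\<dots> = (\<Sum>x\<in>UNIV. \<Sum>j\<in>A. if s j = x then F x else 0)" by (rule sum.swap)
  also have "\<dots> = (\<Sum>x\<in>UNIV. real (card {j\<in>A. s j = x}) * F x)"
  proof (rule sum.cong[OF refl])
    fix x
    have "real (card {j\<in>A. s j = x}) * F x = (\<Sum>j\<in>A. (if s j = x then 1 else 0) * F x)"
      using assms by (simp add: card_filter_sum sum_distrib_right)
    also have "\<dots> = (\<Sum>j\<in>A. if s j = x then F x else 0)" by (rule sum.cong) auto
    finally show "(\<Sum>j\<in>A. if s j = x then F x else 0) = real (card {j\<in>A. s j = x}) * F x" by simp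
  qed
  finally show ?thesis .
qed

lemma exp_fin:
  fixes D :: "'a::finite pmf" and f :: "'a \<Rightarrow> real"
  shows "measure_pmf.expectation D f = (\<Sum>a\<in>UNIV. f a * pmf D a)"
  by (rule integral_measure_pmf_real) auto

lemma exp_ind:
  fixes D :: "'a::finite pmf"
  shows "measure_pmf.expectation D (\<lambda>b. if b = y then 1 else 0) = pmf D y"
proof -
  have "measure_pmf.expectation D (\<lambda>b. if b = y then 1 else 0) = (\<Sum>a\<in>UNIV. if a = y then pmf D a else 0)"
    unfolding exp_fin by (rule sum.cong) auto
  then show ?thesis by simp
qed

lemma emp_sum:
  "emp N s k x = (1 / real (N k)) * (\<Sum>j\<in>{1..N k}. if s (k, j) = x then 1 else 0)"
  unfolding emp_def by (subst card_filter_sum) auto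

lemma emp_avg:
  fixes F :: "'x::finite \<Rightarrow> real"
  shows "(\<Sum>x\<in>UNIV. emp N s k x * F x) = (1 / real (N k)) * (\<Sum>j\<in>{1..N k}. F (s (k, j)))"
proof -
  have "(\<Sum>x\<in>UNIV. emp N s k x * F x) = (1 / real (N k)) * (\<Sum>x\<in>UNIV. real (card {j\<in>{1..N k}. s (k, j) = x}) * F x)"
    unfolding emp_def sum_distrib_left by (rule sum.cong) auto
  also have "\<dots> = (1 / real (N k)) * (\<Sum>j\<in>{1..N k}. F (s (k, j)))"
    by (subst fiber[of "{1..N k}" F "\<lambda>j. s (k, j)"]) auto
  finally show ?thesis .
qed

lemma agents_Sigma: "agents K N = Sigma {1..K} (\<lambda>k. {1..N k})"
  by (auto simp: agents_def)

lemma finite_agents: "finite (agents K N)"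
  by (simp add: agents_Sigma)

lemma card_agents: "card (agents K N) = (\<Sum>k\<in>{1..K}. N k)"
  by (simp add: agents_Sigma card_SigmaI)

lemma sum_agents: "(\<Sum>i\<in>agents K N. F i) = (\<Sum>k\<in>{1..K}. \<Sum>j\<in>{1..N k}. F (k, j))"
  by (simp add: agents_Sigma sum.Sigma)

lemma Pair_agents: "k \<in> {1..K} \<Longrightarrow> Pair k ` {1..N k} \<subseteq> agents K N"
  by (auto simp: agents_def)

lemma emp_distK:
  fixes s :: "nat \<times> nat \<Rightarrow> 'x::finite"
  assumes "\<forall>k\<in>{1..K}. N k \<ge> 1"
  shows "is_distK K (emp N s)"
  unfolding is_distK_def
proof (intro ballI conjI allI)
  fix k a assume k: "k \<in> {1..K}"
  show "0 \<le> emp N s k a" by (simp add: emp_def)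
  have "(\<Sum>a\<in>UNIV. emp N s k a) = (\<Sum>a\<in>UNIV. emp N s k a * 1)" by simp
  also have "\<dots> = 1" using assms k by (subst emp_avg) force
  finally show "(\<Sum>a\<in>UNIV. emp N s k a) = 1" .
qed

lemma nuMF_distK:
  fixes mu :: "'x::finite distK" and pol :: "nat \<Rightarrow> 'x \<Rightarrow> 'x distK \<Rightarrow> 'u::finite pmf"
  assumes "is_distK K mu"
  shows "is_distK K (nuMF mu pol)"
  unfolding is_distK_def
proof (intro ballI conjI allI)
  fix k u assume k: "k \<in> {1..K}"
  show "0 \<le> nuMF mu pol k u" unfolding nuMF_def using assms k
    by (auto simp: is_distK_def intro!: sum_nonneg)
  have "(\<Sum>u\<in>UNIV. nuMF mu pol k u) = (\<Sum>x\<in>UNIV. mu k x * (\<Sum>u\<in>UNIV. pmf (pol k x mu) u))"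
    unfolding nuMF_def by (subst sum.swap) (simp add: sum_distrib_left mult.commute)
  also have "\<dots> = 1" using assms k by (simp add: sum_pmf_eq_1 is_distK_def)
  finally show "(\<Sum>u\<in>UNIV. nuMF mu pol k u) = 1" .
qed

lemma classwise:
  fixes D :: "nat \<times> nat \<Rightarrow> 'a::finite pmf" and g :: "nat \<times> nat \<Rightarrow> 'a \<Rightarrow> 'y::finite \<Rightarrow> real"
  assumes N_pos: "\<forall>k\<in>{1..K}. N k \<ge> 1"
    and g0: "\<And>i a y. 0 \<le> g i a y" and g1: "\<And>i a. (\<Sum>y\<in>UNIV. g i a y) \<le> 1"
  shows "measure_pmf.expectation (Pi_pmf (agents K N) dflt D)
     (\<lambda>a. \<Sum>k\<in>{1..K}. \<Sum>y\<in>UNIV. \<bar>(1 / real (N k)) * (\<Sum>j\<in>{1..N k}. (g (k,j) (a (k,j)) y - measure_pmf.expectation (D (k,j)) (\<lambda>b. g (k,j) b y)))\<bar>)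
     \<le> (\<Sum>k\<in>{1..K}. 1 / sqrt (real (N k))) * sqrt (real CARD('y))"
proof -
  have IP: "integrable (measure_pmf (Pi_pmf (agents K N) dflt D)) f" for f :: "_ \<Rightarrow> real"
    by (rule integrable_measure_pmf_finite[OF fin_Pi[OF finite_agents]])
  show ?thesis
    apply (subst Bochner_Integration.integral_sum[OF IP])
    apply (subst sum_distrib_right)
    apply (rule sum_mono)
    subgoal for k
      using gen_bound[OF finite_agents Pair_agents, of k K N, OF _ _ g0 g1, of dflt D] N_pos
      by simp
    done
qed

lemma nuMF_avg:
  fixes pol :: "nat \<Rightarrow> 'x::finite \<Rightarrow> 'x distK \<Rightarrow> 'u pmf"
  shows "nuMF (emp N s) pol k u = (1 / real (N k)) * (\<Sum>j\<in>{1..N k}. pmf (pol k (s (k, j)) (emp N s)) u)"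
  unfolding nuMF_def by (subst emp_avg[symmetric]) (simp add: mult.commute)

lemma l1_rewrite_a:
  fixes pol :: "nat \<Rightarrow> nat \<Rightarrow> 'x::finite \<Rightarrow> 'x distK \<Rightarrow> 'u::finite pmf"
  shows "l1K K (emp N a) (nuMF (emp N s) (pol t)) =
    (\<Sum>k\<in>{1..K}. \<Sum>u\<in>UNIV. \<bar>(1 / real (N k)) * (\<Sum>j\<in>{1..N k}.
        ((\<lambda>i b y. if b = y then 1 else 0) (k,j) (a (k,j)) u
         - measure_pmf.expectation ((\<lambda>(k, j). pol t k (s (k, j)) (emp N s)) (k,j))
             (\<lambda>b. (\<lambda>i b y. if b = y then (1::real) else 0) (k,j) b u)))\<bar>)"
  unfolding l1K_def
  by (intro sum.cong refl arg_cong[where f=abs])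
     (simp add: exp_ind emp_sum nuMF_avg sum_subtractf right_diff_distrib)

lemma part_a_s:
  fixes pol :: "nat \<Rightarrow> nat \<Rightarrow> 'x::finite \<Rightarrow> 'x distK \<Rightarrow> 'u::finite pmf"
    and s :: "nat \<times> nat \<Rightarrow> 'x"
  assumes N_pos: "\<forall>k\<in>{1..K}. N k \<ge> 1"
  shows "measure_pmf.expectation (act_dist K N pol t s) (\<lambda>a. l1K K (emp N a) (nuMF (emp N s) (pol t)))
     \<le> (\<Sum>k\<in>{1..K}. 1 / sqrt (real (N k))) * sqrt (real CARD('u))"
  unfolding l1_rewrite_a act_dist_def
  by (rule classwise[OF N_pos]) auto

lemma PMF_avg:
  fixes pol :: "nat \<Rightarrow> 'x::finite \<Rightarrow> 'x distK \<Rightarrow> 'u::finite pmf"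
  shows "PMF P (emp N s) pol k y = (1 / real (N k)) * (\<Sum>j\<in>{1..N k}.
     measure_pmf.expectation (pol k (s (k, j)) (emp N s)) (\<lambda>b. pmf (P k (s (k, j)) b (emp N s) (nuMF (emp N s) pol)) y))"
proof -
  have "PMF P (emp N s) pol k y = (\<Sum>x\<in>UNIV. emp N s k x *
      measure_pmf.expectation (pol k x (emp N s)) (\<lambda>b. pmf (P k x b (emp N s) (nuMF (emp N s) pol)) y))"
    unfolding PMF_def exp_fin by (simp add: sum_distrib_left mult_ac)
  also have "\<dots> = (1 / real (N k)) * (\<Sum>j\<in>{1..N k}.
     measure_pmf.expectation (pol k (s (k, j)) (emp N s)) (\<lambda>b. pmf (P k (s (k, j)) b (emp N s) (nuMF (emp N s) pol)) y))"
    by (rule emp_avg)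
  finally show ?thesis .
qed

lemma l1K_self: "l1K K mu mu = 0"
  by (simp add: l1K_def)

lemma c_pointwise:
  fixes pol :: "nat \<Rightarrow> nat \<Rightarrow> 'x::finite \<Rightarrow> 'x distK \<Rightarrow> 'u::finite pmf"
    and P :: "nat \<Rightarrow> 'x \<Rightarrow> 'u \<Rightarrow> 'x distK \<Rightarrow> 'u distK \<Rightarrow> 'x pmf"
    and s s' :: "nat \<times> nat \<Rightarrow> 'x" and a :: "nat \<times> nat \<Rightarrow> 'u"
  assumes N_pos: "\<forall>k\<in>{1..K}. N k \<ge> 1"
    and P_lip: "\<forall>k\<in>{1..K}. \<forall>x u mu1 nu1 mu2 nu2.
        is_distK K mu1 \<and> is_distK K nu1 \<and> is_distK K mu2 \<and> is_distK K nu2 \<longrightarrow>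
        (\<Sum>y\<in>UNIV. \<bar>pmf (P k x u mu1 nu1) y - pmf (P k x u mu2 nu2) y\<bar>)
          \<le> L_P * (l1K K mu1 mu2 + l1K K nu1 nu2)"
  shows "l1K K (emp N s') (PMF P (emp N s) (pol t)) \<le>
     (\<Sum>k\<in>{1..K}. \<Sum>y\<in>UNIV. \<bar>(1 / real (N k)) * (\<Sum>j\<in>{1..N k}.
        ((if s' (k,j) = y then 1 else 0) - pmf (P k (s (k,j)) (a (k,j)) (emp N s) (emp N a)) y))\<bar>)
     + real K * L_P * l1K K (emp N a) (nuMF (emp N s) (pol t))
     + (\<Sum>k\<in>{1..K}. \<Sum>y\<in>UNIV. \<bar>(1 / real (N k)) * (\<Sum>j\<in>{1..N k}.
        (pmf (P k (s (k,j)) (a (k,j)) (emp N s) (nuMF (emp N s) (pol t))) y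
         - measure_pmf.expectation (pol t k (s (k, j)) (emp N s)) (\<lambda>b. pmf (P k (s (k, j)) b (emp N s) (nuMF (emp N s) (pol t))) y)))\<bar>)"
proof -
  define mu where "mu = emp N s"
  define nu where "nu = nuMF mu (pol t)"
  define p1 where "p1 k j y = pmf (P k (s (k,j)) (a (k,j)) mu (emp N a)) y" for k j y
  define p2 where "p2 k j y = pmf (P k (s (k,j)) (a (k,j)) mu nu) y" for k j y
  define e where "e k j y = measure_pmf.expectation (pol t k (s (k, j)) mu) (\<lambda>b. pmf (P k (s (k, j)) b mu nu) y)" for k j y
  define ind where "ind k j y = (if s' (k,j) = y then 1 else (0::real))" for k j y
  have dmu: "is_distK K mu" unfolding mu_def by (rule emp_distK[OF N_pos])
  have da: "is_distK K (emp N a)" by (rule emp_distK[OF N_pos])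
  have dnu: "is_distK K nu" unfolding nu_def by (rule nuMF_distK[OF dmu])
  have A2: "(\<Sum>y\<in>UNIV. \<bar>(1 / real (N k)) * (\<Sum>j\<in>{1..N k}. p1 k j y - p2 k j y)\<bar>) \<le> L_P * l1K K (emp N a) nu"
    if k: "k \<in> {1..K}" for k
  proof -
    have Nk: "N k \<ge> 1" using N_pos k by auto
    have "(\<Sum>y\<in>UNIV. \<bar>(1 / real (N k)) * (\<Sum>j\<in>{1..N k}. p1 k j y - p2 k j y)\<bar>)
        \<le> (\<Sum>y\<in>UNIV. (1 / real (N k)) * (\<Sum>j\<in>{1..N k}. \<bar>p1 k j y - p2 k j y\<bar>))"
      by (intro sum_mono) (simp add: abs_mult sum_abs divide_right_mono)
    also have "\<dots> = (1 / real (N k)) * (\<Sum>j\<in>{1..N k}. \<Sum>y\<in>UNIV. \<bar>p1 k j y - p2 k j y\<bar>)"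
      by (simp add: sum_divide_distrib[symmetric] sum.swap[of _ UNIV])
    also have "\<dots> \<le> (1 / real (N k)) * (\<Sum>j\<in>{1..N k}. L_P * (l1K K mu mu + l1K K (emp N a) nu))"
      unfolding p1_def p2_def
      by (intro mult_left_mono sum_mono) (use P_lip k dmu da dnu in auto)
    also have "\<dots> = L_P * l1K K (emp N a) nu" using Nk by (simp add: l1K_self)
    finally show ?thesis .
  qed
  have tri: "\<bar>x1 + x2 + x3\<bar> \<le> \<bar>x1\<bar> + \<bar>x2\<bar> + \<bar>x3\<bar>" for x1 x2 x3 :: real by arith
  have split: "emp N s' k y - PMF P mu (pol t) k y =
      (1 / real (N k)) * (\<Sum>j\<in>{1..N k}. ind k j y - p1 k j y)
    + (1 / real (N k)) * (\<Sum>j\<in>{1..N k}. p1 k j y - p2 k j y)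
    + (1 / real (N k)) * (\<Sum>j\<in>{1..N k}. p2 k j y - e k j y)" for k y
    unfolding mu_def e_def nu_def PMF_avg emp_sum[of N s'] ind_def
    by (simp add: sum_subtractf algebra_simps)
  have "l1K K (emp N s') (PMF P mu (pol t)) \<le>
      (\<Sum>k\<in>{1..K}. \<Sum>y\<in>UNIV. \<bar>(1 / real (N k)) * (\<Sum>j\<in>{1..N k}. ind k j y - p1 k j y)\<bar>
         + \<bar>(1 / real (N k)) * (\<Sum>j\<in>{1..N k}. p1 k j y - p2 k j y)\<bar>
         + \<bar>(1 / real (N k)) * (\<Sum>j\<in>{1..N k}. p2 k j y - e k j y)\<bar>)"
    unfolding l1K_def split by (intro sum_mono tri)
  also have "\<dots> = (\<Sum>k\<in>{1..K}. \<Sum>y\<in>UNIV. \<bar>(1 / real (N k)) * (\<Sum>j\<in>{1..N k}. ind k j y - p1 k j y)\<bar>)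
      + (\<Sum>k\<in>{1..K}. \<Sum>y\<in>UNIV. \<bar>(1 / real (N k)) * (\<Sum>j\<in>{1..N k}. p1 k j y - p2 k j y)\<bar>)
      + (\<Sum>k\<in>{1..K}. \<Sum>y\<in>UNIV. \<bar>(1 / real (N k)) * (\<Sum>j\<in>{1..N k}. p2 k j y - e k j y)\<bar>)"
    by (simp add: sum.distrib)
  also have "(\<Sum>k\<in>{1..K}. \<Sum>y\<in>UNIV. \<bar>(1 / real (N k)) * (\<Sum>j\<in>{1..N k}. p1 k j y - p2 k j y)\<bar>)
      \<le> (\<Sum>k\<in>{1..K}. L_P * l1K K (emp N a) nu)"
    by (rule sum_mono) (rule A2)
  also have "\<dots> = real K * L_P * l1K K (emp N a) nu" by simp
  finally show ?thesis unfolding mu_def nu_def ind_def p1_def p2_def e_def by simp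
qed

lemma l1K_nonneg: "0 \<le> l1K K mu nu"
  unfolding l1K_def by (intro sum_nonneg) auto

lemma T1_bound:
  fixes P :: "nat \<Rightarrow> 'x::finite \<Rightarrow> 'u::finite \<Rightarrow> 'x distK \<Rightarrow> 'u distK \<Rightarrow> 'x pmf"
    and s :: "nat \<times> nat \<Rightarrow> 'x" and a :: "nat \<times> nat \<Rightarrow> 'u"
  assumes N_pos: "\<forall>k\<in>{1..K}. N k \<ge> 1"
  shows "measure_pmf.expectation (next_dist K N P s a) (\<lambda>s'.
     (\<Sum>k\<in>{1..K}. \<Sum>y\<in>UNIV. \<bar>(1 / real (N k)) * (\<Sum>j\<in>{1..N k}.
        ((if s' (k,j) = y then 1 else 0) - pmf (P k (s (k,j)) (a (k,j)) (emp N s) (emp N a)) y))\<bar>))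
     \<le> (\<Sum>k\<in>{1..K}. 1 / sqrt (real (N k))) * sqrt (real CARD('x))"
proof -
  let ?D = "\<lambda>(k, j). P k (s (k, j)) (a (k, j)) (emp N s) (emp N a)"
  let ?g = "\<lambda>i b y. if b = y then 1 else (0::real)"
  have eq: "(\<Sum>k\<in>{1..K}. \<Sum>y\<in>UNIV. \<bar>(1 / real (N k)) * (\<Sum>j\<in>{1..N k}.
        ((if s' (k,j) = y then 1 else 0) - pmf (P k (s (k,j)) (a (k,j)) (emp N s) (emp N a)) y))\<bar>)
     = (\<Sum>k\<in>{1..K}. \<Sum>y\<in>UNIV. \<bar>(1 / real (N k)) * (\<Sum>j\<in>{1..N k}.
        (?g (k,j) (s' (k,j)) y - measure_pmf.expectation (?D (k,j)) (\<lambda>b. ?g (k,j) b y)))\<bar>)" for s'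
    by (simp add: exp_ind)
  show ?thesis
    unfolding eq next_dist_def
    by (rule classwise[OF N_pos]) auto
qed

lemma T3_bound:
  fixes P :: "nat \<Rightarrow> 'x::finite \<Rightarrow> 'u::finite \<Rightarrow> 'x distK \<Rightarrow> 'u distK \<Rightarrow> 'x pmf"
    and pol :: "nat \<Rightarrow> nat \<Rightarrow> 'x \<Rightarrow> 'x distK \<Rightarrow> 'u pmf"
    and s :: "nat \<times> nat \<Rightarrow> 'x"
  assumes N_pos: "\<forall>k\<in>{1..K}. N k \<ge> 1"
  shows "measure_pmf.expectation (act_dist K N pol t s) (\<lambda>a.
     (\<Sum>k\<in>{1..K}. \<Sum>y\<in>UNIV. \<bar>(1 / real (N k)) * (\<Sum>j\<in>{1..N k}.
        (pmf (P k (s (k,j)) (a (k,j)) (emp N s) (nuMF (emp N s) (pol t))) y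
         - measure_pmf.expectation (pol t k (s (k, j)) (emp N s)) (\<lambda>b. pmf (P k (s (k, j)) b (emp N s) (nuMF (emp N s) (pol t))) y)))\<bar>))
     \<le> (\<Sum>k\<in>{1..K}. 1 / sqrt (real (N k))) * sqrt (real CARD('x))"
proof -
  let ?D = "\<lambda>(k, j). pol t k (s (k, j)) (emp N s)"
  let ?g = "\<lambda>i b y. pmf (P (fst i) (s i) b (emp N s) (nuMF (emp N s) (pol t))) y"
  have "measure_pmf.expectation (Pi_pmf (agents K N) undefined ?D) (\<lambda>a.
     \<Sum>k\<in>{1..K}. \<Sum>y\<in>UNIV. \<bar>(1 / real (N k)) * (\<Sum>j\<in>{1..N k}. (?g (k,j) (a (k,j)) y - measure_pmf.expectation (?D (k,j)) (\<lambda>b. ?g (k,j) b y)))\<bar>)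
     \<le> (\<Sum>k\<in>{1..K}. 1 / sqrt (real (N k))) * sqrt (real CARD('x))"
    by (rule classwise[OF N_pos]) (auto simp: sum_pmf_eq_1)
  then show ?thesis unfolding act_dist_def by simp
qed

lemma part_c_s:
  fixes pol :: "nat \<Rightarrow> nat \<Rightarrow> 'x::finite \<Rightarrow> 'x distK \<Rightarrow> 'u::finite pmf"
    and P :: "nat \<Rightarrow> 'x \<Rightarrow> 'u \<Rightarrow> 'x distK \<Rightarrow> 'u distK \<Rightarrow> 'x pmf"
    and s :: "nat \<times> nat \<Rightarrow> 'x"
  assumes N_pos: "\<forall>k\<in>{1..K}. N k \<ge> 1" and LP: "L_P > 0"
    and P_lip: "\<forall>k\<in>{1..K}. \<forall>x u mu1 nu1 mu2 nu2.
        is_distK K mu1 \<and> is_distK K nu1 \<and> is_distK K mu2 \<and> is_distK K nu2 \<longrightarrow>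
        (\<Sum>y\<in>UNIV. \<bar>pmf (P k x u mu1 nu1) y - pmf (P k x u mu2 nu2) y\<bar>)
          \<le> L_P * (l1K K mu1 mu2 + l1K K nu1 nu2)"
  shows "measure_pmf.expectation (bind_pmf (act_dist K N pol t s) (\<lambda>a. map_pmf (\<lambda>s'. (s, a, s')) (next_dist K N P s a)))
      (\<lambda>(s, a, s'). l1K K (emp N s') (PMF P (emp N s) (pol t)))
    \<le> (2 + real K * L_P) * (\<Sum>k\<in>{1..K}. 1 / sqrt (real (N k))) * sqrt (real CARD('x) * real CARD('u))"
proof -
  define S where "S = (\<Sum>k\<in>{1..K}. 1 / sqrt (real (N k)))"
  define T1 where "T1 a s' = (\<Sum>k\<in>{1..K}. \<Sum>y\<in>UNIV. \<bar>(1 / real (N k)) * (\<Sum>j\<in>{1..N k}.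
        ((if s' (k,j) = y then 1 else 0) - pmf (P k (s (k,j)) (a (k,j)) (emp N s) (emp N a)) y))\<bar>)" for a s'
  define T3 where "T3 a = (\<Sum>k\<in>{1..K}. \<Sum>y\<in>UNIV. \<bar>(1 / real (N k)) * (\<Sum>j\<in>{1..N k}.
        (pmf (P k (s (k,j)) (a (k,j)) (emp N s) (nuMF (emp N s) (pol t))) y
         - measure_pmf.expectation (pol t k (s (k, j)) (emp N s)) (\<lambda>b. pmf (P k (s (k, j)) b (emp N s) (nuMF (emp N s) (pol t))) y)))\<bar>)" for a
  define L where "L a = l1K K (emp N a) (nuMF (emp N s) (pol t))" for a
  have S0: "0 \<le> S" unfolding S_def by (intro sum_nonneg) auto
  have finA: "finite (set_pmf (act_dist K N pol t s))"
    unfolding act_dist_def by (rule fin_Pi[OF finite_agents])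
  have finN: "finite (set_pmf (next_dist K N P s a))" for a
    unfolding next_dist_def by (rule fin_Pi[OF finite_agents])
  have IA: "integrable (measure_pmf (act_dist K N pol t s)) f" for f :: "_ \<Rightarrow> real"
    by (rule integrable_measure_pmf_finite[OF finA])
  have IN: "integrable (measure_pmf (next_dist K N P s a)) f" for a and f :: "_ \<Rightarrow> real"
    by (rule integrable_measure_pmf_finite[OF finN])
  have step1: "measure_pmf.expectation (bind_pmf (act_dist K N pol t s) (\<lambda>a. map_pmf (\<lambda>s'. (s, a, s')) (next_dist K N P s a)))
      (\<lambda>(s, a, s'). l1K K (emp N s') (PMF P (emp N s) (pol t)))
    \<le> measure_pmf.expectation (act_dist K N pol t s) (\<lambda>a. S * sqrt (real CARD('x)) + real K * L_P * L a + T3 a)"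
  proof (rule bind_bound_gen)
    show "0 \<le> (case x of (s, a, s') \<Rightarrow> l1K K (emp N s') (PMF P (emp N s) (pol t)))" for x
      by (auto simp: l1K_nonneg split: prod.splits)
    show "finite (set_pmf (act_dist K N pol t s))" by (rule finA)
    show "finite (set_pmf (map_pmf (\<lambda>s'. (s, a, s')) (next_dist K N P s a)))" for a
      using finN by simp
    fix a
    have "measure_pmf.expectation (map_pmf (\<lambda>s'. (s, a, s')) (next_dist K N P s a))
        (\<lambda>(s, a, s'). l1K K (emp N s') (PMF P (emp N s) (pol t)))
      = measure_pmf.expectation (next_dist K N P s a) (\<lambda>s'. l1K K (emp N s') (PMF P (emp N s) (pol t)))"
      by simp
    also have "\<dots> \<le> measure_pmf.expectation (next_dist K N P s a) (\<lambda>s'. T1 a s' + (real K * L_P * L a + T3 a))"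
      by (rule Bochner_Integration.integral_mono[OF IN IN])
         (use c_pointwise[OF N_pos P_lip] in \<open>simp add: T1_def T3_def L_def add.assoc\<close>)
    also have "\<dots> = measure_pmf.expectation (next_dist K N P s a) (\<lambda>s'. T1 a s') + (real K * L_P * L a + T3 a)"
      by (simp add: Bochner_Integration.integral_add[OF IN IN])
    also have "\<dots> \<le> S * sqrt (real CARD('x)) + (real K * L_P * L a + T3 a)"
      using T1_bound[OF N_pos, of P s a] unfolding T1_def S_def by simp
    finally show "measure_pmf.expectation (map_pmf (\<lambda>s'. (s, a, s')) (next_dist K N P s a))
        (\<lambda>(s, a, s'). l1K K (emp N s') (PMF P (emp N s) (pol t)))
      \<le> S * sqrt (real CARD('x)) + real K * L_P * L a + T3 a" by (simp add: add.assoc)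
  qed
  also have "\<dots> = S * sqrt (real CARD('x)) + real K * L_P * measure_pmf.expectation (act_dist K N pol t s) L
      + measure_pmf.expectation (act_dist K N pol t s) T3"
    by (simp add: Bochner_Integration.integral_add[OF IA IA])
  also have "\<dots> \<le> S * sqrt (real CARD('x)) + real K * L_P * (S * sqrt (real CARD('u))) + S * sqrt (real CARD('x))"
  proof (intro add_mono order_refl mult_left_mono)
    show "measure_pmf.expectation (act_dist K N pol t s) L \<le> S * sqrt (real CARD('u))"
      unfolding L_def S_def by (rule part_a_s[OF N_pos])
    show "measure_pmf.expectation (act_dist K N pol t s) T3 \<le> S * sqrt (real CARD('x))"
      unfolding T3_def S_def by (rule T3_bound[OF N_pos])
    show "0 \<le> real K * L_P" using LP by simp
  qed
  also have "\<dots> \<le> (2 + real K * L_P) * S * sqrt (real CARD('x) * real CARD('u))"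
  proof -
    have x1: "sqrt (real CARD('x)) \<le> sqrt (real CARD('x) * real CARD('u))"
      by (rule real_sqrt_le_mono) (simp add: mult_le_cancel_left1)
    have u1: "sqrt (real CARD('u)) \<le> sqrt (real CARD('x) * real CARD('u))"
      by (rule real_sqrt_le_mono) (simp add: mult_le_cancel_right1)
    have KL: "0 \<le> real K * L_P" using LP by simp
    have "S * sqrt (real CARD('x)) \<le> S * sqrt (real CARD('x) * real CARD('u))"
      by (rule mult_left_mono[OF x1 S0])
    moreover have "real K * L_P * (S * sqrt (real CARD('u))) \<le> real K * L_P * (S * sqrt (real CARD('x) * real CARD('u)))"
      by (intro mult_left_mono[OF _ KL] mult_left_mono[OF u1 S0])
    ultimately show ?thesis by (simp add: algebra_simps)
  qed
  finally show ?thesis unfolding S_def .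
qed

lemma rMF_avg:
  fixes pol :: "nat \<Rightarrow> 'x::finite \<Rightarrow> 'x distK \<Rightarrow> 'u::finite pmf"
  shows "rMF r k (emp N s) pol = (1 / real (N k)) * (\<Sum>j\<in>{1..N k}.
     measure_pmf.expectation (pol k (s (k, j)) (emp N s)) (\<lambda>b. r k (s (k, j)) b (emp N s) (nuMF (emp N s) pol)))"
proof -
  have "rMF r k (emp N s) pol = (\<Sum>x\<in>UNIV. emp N s k x *
      measure_pmf.expectation (pol k x (emp N s)) (\<lambda>b. r k x b (emp N s) (nuMF (emp N s) pol)))"
    unfolding rMF_def exp_fin by (simp add: sum_distrib_left mult_ac)
  also have "\<dots> = (1 / real (N k)) * (\<Sum>j\<in>{1..N k}.
     measure_pmf.expectation (pol k (s (k, j)) (emp N s)) (\<lambda>b. r k (s (k, j)) b (emp N s) (nuMF (emp N s) pol)))"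
    by (rule emp_avg)
  finally show ?thesis .
qed

lemma part_b_s:
  fixes pol :: "nat \<Rightarrow> nat \<Rightarrow> 'x::finite \<Rightarrow> 'x distK \<Rightarrow> 'u::finite pmf"
    and r :: "nat \<Rightarrow> 'x \<Rightarrow> 'u \<Rightarrow> 'x distK \<Rightarrow> 'u distK \<Rightarrow> real"
    and s :: "nat \<times> nat \<Rightarrow> 'x"
  assumes K_pos: "K \<ge> 1" and N_pos: "\<forall>k\<in>{1..K}. N k \<ge> 1" and MR: "M_R > 0" and LR: "L_R > 0"
    and r_bound: "\<forall>k\<in>{1..K}. \<forall>x u mu nu. is_distK K mu \<and> is_distK K nu \<longrightarrow> \<bar>r k x u mu nu\<bar> \<le> M_R"
    and r_lip: "\<forall>k\<in>{1..K}. \<forall>x u mu1 nu1 mu2 nu2.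
        is_distK K mu1 \<and> is_distK K nu1 \<and> is_distK K mu2 \<and> is_distK K nu2 \<longrightarrow>
        \<bar>r k x u mu1 nu1 - r k x u mu2 nu2\<bar> \<le> L_R * (l1K K mu1 mu2 + l1K K nu1 nu2)"
  shows "measure_pmf.expectation (act_dist K N pol t s)
        (\<lambda>a. \<bar>(1 / real (\<Sum>k\<in>{1..K}. N k)) *
              (\<Sum>k\<in>{1..K}. \<Sum>j\<in>{1..N k}. r k (s (k, j)) (a (k, j)) (emp N s) (emp N a))
           - (\<Sum>k\<in>{1..K}. (real (N k) / real (\<Sum>k'\<in>{1..K}. N k')) * rMF r k (emp N s) (pol t))\<bar>)
      \<le> (M_R + L_R) * (\<Sum>k\<in>{1..K}. 1 / sqrt (real (N k))) * sqrt (real CARD('u))"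
proof -
  define S where "S = (\<Sum>k\<in>{1..K}. 1 / sqrt (real (N k)))"
  define Np where "Np = (\<Sum>k\<in>{1..K}. N k)"
  define mu where "mu = emp N s"
  define nu where "nu = nuMF mu (pol t)"
  define D where "D = (\<lambda>(k, j). pol t k (s (k, j)) mu)"
  define G where "G = (\<lambda>i b. r (fst i) (s i) b mu nu)"
  define L where "L a = l1K K (emp N a) nu" for a
  have dmu: "is_distK K mu" unfolding mu_def by (rule emp_distK[OF N_pos])
  have dnu: "is_distK K nu" unfolding nu_def by (rule nuMF_distK[OF dmu])
  have N1: "N 1 \<ge> 1" using N_pos K_pos by auto
  have N1Np: "N 1 \<le> Np" unfolding Np_def by (rule member_le_sum) (use K_pos in auto)
  have Np1: "Np \<ge> 1" using N1 N1Np by simp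
  have S0: "0 \<le> S" unfolding S_def by (intro sum_nonneg) auto
  have finA: "finite (set_pmf (act_dist K N pol t s))"
    unfolding act_dist_def by (rule fin_Pi[OF finite_agents])
  have IA: "integrable (measure_pmf (act_dist K N pol t s)) f" for f :: "_ \<Rightarrow> real"
    by (rule integrable_measure_pmf_finite[OF finA])
  have cardNp: "card (agents K N) = Np" by (simp add: card_agents Np_def)
  have ag: "i \<in> agents K N \<Longrightarrow> fst i \<in> {1..K}" for i by (auto simp: agents_def)
  have pw: "\<bar>(1 / real Np) * (\<Sum>k\<in>{1..K}. \<Sum>j\<in>{1..N k}. r k (s (k, j)) (a (k, j)) mu (emp N a))
           - (\<Sum>k\<in>{1..K}. (real (N k) / real Np) * rMF r k mu (pol t))\<bar>
       \<le> L_R * L a + (1 / real Np) * \<bar>\<Sum>i\<in>agents K N. (G i (a i) - measure_pmf.expectation (D i) (G i))\<bar>" for a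
  proof -
    have da: "is_distK K (emp N a)" by (rule emp_distK[OF N_pos])
    have rm: "(real (N k) / real Np) * rMF r k mu (pol t) = (1 / real Np) * (\<Sum>j\<in>{1..N k}. measure_pmf.expectation (D (k,j)) (G (k,j)))"
      if k: "k \<in> {1..K}" for k
    proof -
      have "N k \<ge> 1" using k N_pos by auto
      then show ?thesis unfolding mu_def nu_def rMF_avg D_def G_def by simp
    qed
    have eqn: "(1 / real Np) * (\<Sum>k\<in>{1..K}. \<Sum>j\<in>{1..N k}. r k (s (k, j)) (a (k, j)) mu (emp N a))
           - (\<Sum>k\<in>{1..K}. (real (N k) / real Np) * rMF r k mu (pol t))
         = (1 / real Np) * (\<Sum>k\<in>{1..K}. \<Sum>j\<in>{1..N k}. r k (s (k, j)) (a (k, j)) mu (emp N a) - G (k,j) (a (k,j)))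
         + (1 / real Np) * (\<Sum>i\<in>agents K N. (G i (a i) - measure_pmf.expectation (D i) (G i)))"
    proof -
      have "(\<Sum>k\<in>{1..K}. (real (N k) / real Np) * rMF r k mu (pol t))
          = (\<Sum>k\<in>{1..K}. (1 / real Np) * (\<Sum>j\<in>{1..N k}. measure_pmf.expectation (D (k,j)) (G (k,j))))"
        by (rule sum.cong[OF refl]) (rule rm)
      also have "\<dots> = (1 / real Np) * (\<Sum>i\<in>agents K N. measure_pmf.expectation (D i) (G i))"
        by (simp add: sum_agents sum_distrib_left)
      finally show ?thesis
        by (simp add: sum_agents sum_subtractf sum_distrib_left[symmetric] algebra_simps)
    qed
    have "\<bar>(1 / real Np) * (\<Sum>k\<in>{1..K}. \<Sum>j\<in>{1..N k}. r k (s (k, j)) (a (k, j)) mu (emp N a))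
           - (\<Sum>k\<in>{1..K}. (real (N k) / real Np) * rMF r k mu (pol t))\<bar> \<le> (1 / real Np) * (\<Sum>k\<in>{1..K}. \<Sum>j\<in>{1..N k}. \<bar>r k (s (k, j)) (a (k, j)) mu (emp N a) - G (k,j) (a (k,j))\<bar>)
         + (1 / real Np) * \<bar>\<Sum>i\<in>agents K N. (G i (a i) - measure_pmf.expectation (D i) (G i))\<bar>"
    proof -
      have "\<bar>\<Sum>k\<in>{1..K}. \<Sum>j\<in>{1..N k}. r k (s (k, j)) (a (k, j)) mu (emp N a) - G (k,j) (a (k,j))\<bar>
          \<le> (\<Sum>k\<in>{1..K}. \<Sum>j\<in>{1..N k}. \<bar>r k (s (k, j)) (a (k, j)) mu (emp N a) - G (k,j) (a (k,j))\<bar>)"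
        by (rule order_trans[OF sum_abs sum_mono[OF sum_abs]])
      then show ?thesis unfolding eqn
        by (intro order_trans[OF abs_triangle_ineq] add_mono) (auto simp: abs_mult intro!: mult_left_mono divide_right_mono)
    qed
    also have "(\<Sum>k\<in>{1..K}. \<Sum>j\<in>{1..N k}. \<bar>r k (s (k, j)) (a (k, j)) mu (emp N a) - G (k,j) (a (k,j))\<bar>)
        \<le> (\<Sum>k\<in>{1..K}. \<Sum>j\<in>{1..N k}. L_R * L a)"
      unfolding G_def L_def
    proof (intro sum_mono)
      fix k j assume k: "k \<in> {1..K}"
      have "\<bar>r k (s (k, j)) (a (k, j)) mu (emp N a) - r k (s (k, j)) (a (k, j)) mu nu\<bar>
          \<le> L_R * (l1K K mu mu + l1K K (emp N a) nu)"
        using r_lip[rule_format, OF k, of mu "emp N a" mu nu "s (k,j)" "a (k,j)"] dmu da dnu by simp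
      then show "\<bar>r k (s (k, j)) (a (k, j)) mu (emp N a) - (\<lambda>i b. r (fst i) (s i) b mu nu) (k, j) (a (k, j))\<bar> \<le> L_R * l1K K (emp N a) nu"
        by (simp add: l1K_self)
    qed
    also have "(\<Sum>k\<in>{1..K}. \<Sum>j\<in>{1..N k}. L_R * L a) = real Np * (L_R * L a)"
      unfolding Np_def by (simp add: sum_distrib_right)
    finally have "(\<And>x y. x \<le> y \<Longrightarrow> x / real Np \<le> y / real Np) \<Longrightarrow> ?thesis" using Np1 by simp
    then show ?thesis by (meson divide_right_mono of_nat_0_le_iff)
  qed
  have "measure_pmf.expectation (act_dist K N pol t s)
        (\<lambda>a. \<bar>(1 / real Np) * (\<Sum>k\<in>{1..K}. \<Sum>j\<in>{1..N k}. r k (s (k, j)) (a (k, j)) mu (emp N a))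
           - (\<Sum>k\<in>{1..K}. (real (N k) / real Np) * rMF r k mu (pol t))\<bar>)
      \<le> measure_pmf.expectation (act_dist K N pol t s)
        (\<lambda>a. L_R * L a + (1 / real Np) * \<bar>\<Sum>i\<in>agents K N. (G i (a i) - measure_pmf.expectation (D i) (G i))\<bar>)"
    by (rule Bochner_Integration.integral_mono[OF IA IA pw])
  also have "\<dots> = L_R * measure_pmf.expectation (act_dist K N pol t s) L
       + (1 / real Np) * measure_pmf.expectation (act_dist K N pol t s)
          (\<lambda>a. \<bar>\<Sum>i\<in>agents K N. (G i (a i) - measure_pmf.expectation (D i) (G i))\<bar>)"
    by (simp add: Bochner_Integration.integral_add[OF IA IA])
  also have "\<dots> \<le> L_R * (S * sqrt (real CARD('u))) + (1 / real Np) * sqrt (\<Sum>i\<in>agents K N. measure_pmf.expectation (D i) (\<lambda>b. (G i b)\<^sup>2))"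
  proof (intro add_mono mult_left_mono)
    show "measure_pmf.expectation (act_dist K N pol t s) L \<le> S * sqrt (real CARD('u))"
      unfolding L_def S_def nu_def mu_def by (rule part_a_s[OF N_pos])
    show "measure_pmf.expectation (act_dist K N pol t s)
          (\<lambda>a. \<bar>\<Sum>i\<in>agents K N. (G i (a i) - measure_pmf.expectation (D i) (G i))\<bar>)
        \<le> sqrt (\<Sum>i\<in>agents K N. measure_pmf.expectation (D i) (\<lambda>b. (G i b)\<^sup>2))"
      unfolding act_dist_def mu_def[symmetric] D_def[symmetric]
      by (rule CL[OF finite_agents order_refl])
  qed (use LR in auto)
  finally have bound1: "measure_pmf.expectation (act_dist K N pol t s)
        (\<lambda>a. \<bar>(1 / real Np) * (\<Sum>k\<in>{1..K}. \<Sum>j\<in>{1..N k}. r k (s (k, j)) (a (k, j)) mu (emp N a))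
           - (\<Sum>k\<in>{1..K}. (real (N k) / real Np) * rMF r k mu (pol t))\<bar>)
      \<le> L_R * (S * sqrt (real CARD('u))) + (1 / real Np) * sqrt (\<Sum>i\<in>agents K N. measure_pmf.expectation (D i) (\<lambda>b. (G i b)\<^sup>2))" .
  have "(\<Sum>i\<in>agents K N. measure_pmf.expectation (D i) (\<lambda>b. (G i b)\<^sup>2)) \<le> (\<Sum>i\<in>agents K N. M_R\<^sup>2)"
  proof (intro sum_mono)
    fix i assume i: "i \<in> agents K N"
    have "measure_pmf.expectation (D i) (\<lambda>b. (G i b)\<^sup>2) \<le> measure_pmf.expectation (D i) (\<lambda>b. M_R\<^sup>2)"
    proof (rule Bochner_Integration.integral_mono)
      fix b
      have "\<bar>G i b\<bar> \<le> M_R" unfolding G_def using r_bound[rule_format, OF ag[OF i], of mu nu "s i" b] dmu dnu by simp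
      from power_mono[OF this abs_ge_zero, of 2] show "(G i b)\<^sup>2 \<le> M_R\<^sup>2" by simp
    qed (auto intro!: integrable_measure_pmf_finite)
    then show "measure_pmf.expectation (D i) (\<lambda>b. (G i b)\<^sup>2) \<le> M_R\<^sup>2" by simp
  qed
  then have "(1 / real Np) * sqrt (\<Sum>i\<in>agents K N. measure_pmf.expectation (D i) (\<lambda>b. (G i b)\<^sup>2))
      \<le> (1 / real Np) * sqrt (real Np * M_R\<^sup>2)"
    using cardNp by (intro mult_left_mono real_sqrt_le_mono) auto
  also have "\<dots> = M_R / sqrt (real Np)"
  proof -
    have q: "sqrt (real Np) * sqrt (real Np) = real Np" by simp
    have "sqrt (real Np * M_R\<^sup>2) = sqrt (real Np) * M_R" using MR by (simp add: real_sqrt_mult)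
    then show ?thesis using q Np1 by (simp add: field_simps)
  qed
  also have "\<dots> \<le> M_R * (S * sqrt (real CARD('u)))"
  proof -
    have "1 / sqrt (real Np) \<le> 1 / sqrt (real (N 1))"
      using N1 Np1 N1Np by (intro divide_left_mono real_sqrt_le_mono) auto
    also have "\<dots> \<le> S" unfolding S_def by (rule member_le_sum) (use K_pos in auto)
    also have "S \<le> S * sqrt (real CARD('u))" using S0 by (simp add: mult_le_cancel_left1)
    finally show ?thesis using MR by (simp add: divide_inverse mult_left_mono)
  qed
  finally have bound2: "(1 / real Np) * sqrt (\<Sum>i\<in>agents K N. measure_pmf.expectation (D i) (\<lambda>b. (G i b)\<^sup>2))
      \<le> M_R * (S * sqrt (real CARD('u)))" .
  have "L_R * (S * sqrt (real CARD('u))) + M_R * (S * sqrt (real CARD('u))) = (M_R + L_R) * S * sqrt (real CARD('u))"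
    by (simp add: algebra_simps)
  then have main: "measure_pmf.expectation (act_dist K N pol t s)
        (\<lambda>a. \<bar>(1 / real Np) * (\<Sum>k\<in>{1..K}. \<Sum>j\<in>{1..N k}. r k (s (k, j)) (a (k, j)) mu (emp N a))
           - (\<Sum>k\<in>{1..K}. (real (N k) / real Np) * rMF r k mu (pol t))\<bar>)
      \<le> (M_R + L_R) * S * sqrt (real CARD('u))" using bound1 bound2 by linarith
  then show ?thesis unfolding S_def Np_def mu_def .
qed

theorem lemma10:
  fixes K :: nat and N :: "nat \<Rightarrow> nat"
    and M_R L_R L_P :: real
    and r :: "nat \<Rightarrow> 'x::finite \<Rightarrow> 'u::finite \<Rightarrow> 'x distK \<Rightarrow> 'u distK \<Rightarrow> real"
    and P :: "nat \<Rightarrow> 'x \<Rightarrow> 'u \<Rightarrow> 'x distK \<Rightarrow> 'u distK \<Rightarrow> 'x pmf"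
    and pol :: "nat \<Rightarrow> nat \<Rightarrow> 'x \<Rightarrow> 'x distK \<Rightarrow> 'u pmf"
    and init :: "(nat \<times> nat \<Rightarrow> 'x) pmf"
    and t :: nat
  assumes K_pos: "K \<ge> 1"
    and N_pos: "\<forall>k\<in>{1..K}. N k \<ge> 1"
    and consts_pos: "M_R > 0" "L_R > 0" "L_P > 0"
    and r_bound: "\<forall>k\<in>{1..K}. \<forall>x u mu nu. is_distK K mu \<and> is_distK K nu \<longrightarrow> \<bar>r k x u mu nu\<bar> \<le> M_R"
    and r_lip: "\<forall>k\<in>{1..K}. \<forall>x u mu1 nu1 mu2 nu2.
        is_distK K mu1 \<and> is_distK K nu1 \<and> is_distK K mu2 \<and> is_distK K nu2 \<longrightarrow>
        \<bar>r k x u mu1 nu1 - r k x u mu2 nu2\<bar> \<le> L_R * (l1K K mu1 mu2 + l1K K nu1 nu2)"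
    and P_lip: "\<forall>k\<in>{1..K}. \<forall>x u mu1 nu1 mu2 nu2.
        is_distK K mu1 \<and> is_distK K nu1 \<and> is_distK K mu2 \<and> is_distK K nu2 \<longrightarrow>
        (\<Sum>y\<in>UNIV. \<bar>pmf (P k x u mu1 nu1) y - pmf (P k x u mu2 nu2) y\<bar>)
          \<le> L_P * (l1K K mu1 mu2 + l1K K nu1 nu2)"
  shows
    "(measure_pmf.expectation (sa_dist K N pol P init t)
        (\<lambda>(s, a). l1K K (emp N a) (nuMF (emp N s) (pol t)))
      \<le> (\<Sum>k\<in>{1..K}. 1 / sqrt (real (N k))) * sqrt (real CARD('u)))
   \<and> (measure_pmf.expectation (sa_dist K N pol P init t)
        (\<lambda>(s, a). \<bar>(1 / real (\<Sum>k\<in>{1..K}. N k)) *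
              (\<Sum>k\<in>{1..K}. \<Sum>j\<in>{1..N k}. r k (s (k, j)) (a (k, j)) (emp N s) (emp N a))
           - (\<Sum>k\<in>{1..K}. (real (N k) / real (\<Sum>k'\<in>{1..K}. N k')) * rMF r k (emp N s) (pol t))\<bar>)
      \<le> (M_R + L_R) * (\<Sum>k\<in>{1..K}. 1 / sqrt (real (N k))) * sqrt (real CARD('u)))
   \<and> (measure_pmf.expectation (sas_dist K N pol P init t)
        (\<lambda>(s, a, s'). l1K K (emp N s') (PMF P (emp N s) (pol t)))
      \<le> (2 + real K * L_P) * (\<Sum>k\<in>{1..K}. 1 / sqrt (real (N k)))
          * sqrt (real CARD('x) * real CARD('u)))"
  proof -
  define S where "S = (\<Sum>k\<in>{1..K}. 1 / sqrt (real (N k)))"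
  have S0: "0 \<le> S" unfolding S_def by (intro sum_nonneg) auto
  have finM: "finite (set_pmf (map_pmf (\<lambda>a. (s, a)) (act_dist K N pol t s)))" for s
    unfolding act_dist_def set_map_pmf by (intro finite_imageI fin_Pi[OF finite_agents])
  have A: "measure_pmf.expectation (sa_dist K N pol P init t)
        (\<lambda>(s, a). l1K K (emp N a) (nuMF (emp N s) (pol t)))
      \<le> (\<Sum>k\<in>{1..K}. 1 / sqrt (real (N k))) * sqrt (real CARD('u))"
    unfolding sa_dist_def
  proof (rule bind_bound_const)
    show "0 \<le> (case x of (s, a) \<Rightarrow> l1K K (emp N a) (nuMF (emp N s) (pol t)))" for x
      by (auto simp: l1K_nonneg split: prod.splits)
    show "0 \<le> (\<Sum>k\<in>{1..K}. 1 / sqrt (real (N k))) * sqrt (real CARD('u))"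
      using S0 unfolding S_def by simp
    show "finite (set_pmf (map_pmf (\<lambda>a. (s, a)) (act_dist K N pol t s)))" for s by (rule finM)
    show "measure_pmf.expectation (map_pmf (\<lambda>a. (s, a)) (act_dist K N pol t s))
        (\<lambda>(s, a). l1K K (emp N a) (nuMF (emp N s) (pol t)))
      \<le> (\<Sum>k\<in>{1..K}. 1 / sqrt (real (N k))) * sqrt (real CARD('u))" for s
      using part_a_s[OF N_pos, of pol t s] by simp
  qed
  have B: "measure_pmf.expectation (sa_dist K N pol P init t)
        (\<lambda>(s, a). \<bar>(1 / real (\<Sum>k\<in>{1..K}. N k)) *
              (\<Sum>k\<in>{1..K}. \<Sum>j\<in>{1..N k}. r k (s (k, j)) (a (k, j)) (emp N s) (emp N a))
           - (\<Sum>k\<in>{1..K}. (real (N k) / real (\<Sum>k'\<in>{1..K}. N k')) * rMF r k (emp N s) (pol t))\<bar>)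
      \<le> (M_R + L_R) * (\<Sum>k\<in>{1..K}. 1 / sqrt (real (N k))) * sqrt (real CARD('u))"
    unfolding sa_dist_def
  proof (rule bind_bound_const)
    show "0 \<le> (case x of (s, a) \<Rightarrow> \<bar>(1 / real (\<Sum>k\<in>{1..K}. N k)) *
              (\<Sum>k\<in>{1..K}. \<Sum>j\<in>{1..N k}. r k (s (k, j)) (a (k, j)) (emp N s) (emp N a))
           - (\<Sum>k\<in>{1..K}. (real (N k) / real (\<Sum>k'\<in>{1..K}. N k')) * rMF r k (emp N s) (pol t))\<bar>)" for x
      by (auto split: prod.splits)
    show "0 \<le> (M_R + L_R) * (\<Sum>k\<in>{1..K}. 1 / sqrt (real (N k))) * sqrt (real CARD('u))"
      using S0 consts_pos unfolding S_def by simp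
    show "finite (set_pmf (map_pmf (\<lambda>a. (s, a)) (act_dist K N pol t s)))" for s by (rule finM)
    show "measure_pmf.expectation (map_pmf (\<lambda>a. (s, a)) (act_dist K N pol t s))
        (\<lambda>(s, a). \<bar>(1 / real (\<Sum>k\<in>{1..K}. N k)) *
              (\<Sum>k\<in>{1..K}. \<Sum>j\<in>{1..N k}. r k (s (k, j)) (a (k, j)) (emp N s) (emp N a))
           - (\<Sum>k\<in>{1..K}. (real (N k) / real (\<Sum>k'\<in>{1..K}. N k')) * rMF r k (emp N s) (pol t))\<bar>)
      \<le> (M_R + L_R) * (\<Sum>k\<in>{1..K}. 1 / sqrt (real (N k))) * sqrt (real CARD('u))" for s
      using part_b_s[OF K_pos N_pos consts_pos(1,2) r_bound r_lip, of pol t s] by simp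
  qed
  have sas: "sas_dist K N pol P init t = bind_pmf (state_dist K N pol P init t)
      (\<lambda>s. bind_pmf (act_dist K N pol t s) (\<lambda>a. map_pmf (\<lambda>s'. (s, a, s')) (next_dist K N P s a)))"
    unfolding sas_dist_def sa_dist_def by (simp add: bind_assoc_pmf bind_map_pmf)
  have C: "measure_pmf.expectation (sas_dist K N pol P init t)
        (\<lambda>(s, a, s'). l1K K (emp N s') (PMF P (emp N s) (pol t)))
      \<le> (2 + real K * L_P) * (\<Sum>k\<in>{1..K}. 1 / sqrt (real (N k)))
          * sqrt (real CARD('x) * real CARD('u))"
    unfolding sas
  proof (rule bind_bound_const)
    show "0 \<le> (case x of (s, a, s') \<Rightarrow> l1K K (emp N s') (PMF P (emp N s) (pol t)))" for x
      by (auto simp: l1K_nonneg split: prod.splits)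
    show "0 \<le> (2 + real K * L_P) * (\<Sum>k\<in>{1..K}. 1 / sqrt (real (N k))) * sqrt (real CARD('x) * real CARD('u))"
      using S0 consts_pos unfolding S_def by simp
    show "finite (set_pmf (bind_pmf (act_dist K N pol t s) (\<lambda>a. map_pmf (\<lambda>s'. (s, a, s')) (next_dist K N P s a))))" for s
      unfolding act_dist_def next_dist_def set_bind_pmf set_map_pmf
      by (intro finite_UN_I finite_imageI fin_Pi[OF finite_agents])
    show "measure_pmf.expectation (bind_pmf (act_dist K N pol t s) (\<lambda>a. map_pmf (\<lambda>s'. (s, a, s')) (next_dist K N P s a)))
        (\<lambda>(s, a, s'). l1K K (emp N s') (PMF P (emp N s) (pol t)))
      \<le> (2 + real K * L_P) * (\<Sum>k\<in>{1..K}. 1 / sqrt (real (N k))) * sqrt (real CARD('x) * real CARD('u))" for s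
      by (rule part_c_s[OF N_pos consts_pos(3) P_lip])
  qed
  show ?thesis using A B C by blast
qed

end
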